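(* For every positive integer $k$, the windmill of $k$ wheels $W_4^{(k)}$ is difference distance magic orientable.
   Context: For $k\in\mathbb{Z}^+$, $W_4^{(k)}$ is the simple undirected graph on $1+4k$ vertices with vertex set $\{v\}\cup\{v_{ij}:1\le i\le k,\ 1\le j\le 4\}$ and edge set $\bigcup_{i=1}^k\big(\{v_{i1}v_{i2},v_{i1}v_{i3},v_{i3}v_{i4},v_{i2}v_{i4}\}\cup\{vv_{i1},vv_{i2},vv_{i3},vv_{i4}\}\big)$. An orientation of a graph assigns a direction to each edge, giving an oriented graph. In an oriented graph, $N^+(x)=\{y:(y,x)\text{ is an arc}\}$, $N^-(x)=\{y:(x,y)\text{ is an arc}\}$, and for a labeling $f$, $wt_f(x)=\sum_{y\in N^+(x)}f(y)-\sum_{y\in N^-(x)}f(y)$. A DDM labeling of an oriented graph on $n$ vertices is a bijection $f:V\to\{1,\dots,n\}$ with $wt_f(x)=0$ for all $x$. A graph is difference distance magic orientable (DDMO) if it has an orientation admitting a DDM labeling. *)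

theory Defs
  imports Main
begin

text \<open>A simple undirected graph is given by a vertex set V and a set E of
  2-element subsets of V.\<close>

definition is_orientation :: "'a set \<Rightarrow> 'a set set \<Rightarrow> ('a \<times> 'a) set \<Rightarrow> bool" where
  "is_orientation V E D \<longleftrightarrow>
     (\<forall>(x,y)\<in>D. {x,y} \<in> E) \<and>
     (\<forall>e\<in>E. \<exists>x y. e = {x,y} \<and> x \<noteq> y \<and> (((x,y) \<in> D) \<noteq> ((y,x) \<in> D)))"

text \<open>In-neighbours N^+(x) = {y. (y,x) arc}, out-neighbours N^-(x) = {y. (x,y) arc}.\<close>

definition in_nbrs :: "('a \<times> 'a) set \<Rightarrow> 'a \<Rightarrow> 'a set" where
  "in_nbrs D x = {y. (y, x) \<in> D}"

definition out_nbrs :: "('a \<times> 'a) set \<Rightarrow> 'a \<Rightarrow> 'a set" where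
  "out_nbrs D x = {y. (x, y) \<in> D}"

definition wt :: "('a \<times> 'a) set \<Rightarrow> ('a \<Rightarrow> nat) \<Rightarrow> 'a \<Rightarrow> int" where
  "wt D f x = (\<Sum>y\<in>in_nbrs D x. int (f y)) - (\<Sum>y\<in>out_nbrs D x. int (f y))"

definition is_DDM_labeling :: "'a set \<Rightarrow> ('a \<times> 'a) set \<Rightarrow> ('a \<Rightarrow> nat) \<Rightarrow> bool" where
  "is_DDM_labeling V D f \<longleftrightarrow>
     bij_betw f V {1..card V} \<and> (\<forall>x\<in>V. wt D f x = 0)"

definition DDMO :: "'a set \<Rightarrow> 'a set set \<Rightarrow> bool" where
  "DDMO V E \<longleftrightarrow> (\<exists>D f. is_orientation V E D \<and> is_DDM_labeling V D f)"

text \<open>Windmill W_4^(k): centre v = None, v_{ij} = Some (i,j), 1 \<le> i \<le> k, 1 \<le> j \<le> 4.\<close>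

definition windmill_V :: "nat \<Rightarrow> (nat \<times> nat) option set" where
  "windmill_V k = {None} \<union> {Some (i,j) | i j. 1 \<le> i \<and> i \<le> k \<and> 1 \<le> j \<and> j \<le> 4}"

definition windmill_E :: "nat \<Rightarrow> (nat \<times> nat) option set set" where
  "windmill_E k = (\<Union>i\<in>{1..k}.
     {{Some (i,1), Some (i,2)}, {Some (i,1), Some (i,3)},
      {Some (i,3), Some (i,4)}, {Some (i,2), Some (i,4)},
      {None, Some (i,1)}, {None, Some (i,2)}, {None, Some (i,3)}, {None, Some (i,4)}})"

end

theory Submission
  imports Defs
begin

definition wD :: "nat \<Rightarrow> ((nat \<times> nat) option \<times> (nat \<times> nat) option) set" where
  "wD k = (\<Union>i\<in>{1..k}.
     {(Some (i,2), Some (i,1)), (Some (i,3), Some (i,1)),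
      (Some (i,2), Some (i,4)), (Some (i,3), Some (i,4)),
      (Some (i,1), None), (Some (i,4), None),
      (None, Some (i,2)), (None, Some (i,3))})"

definition wf :: "nat \<Rightarrow> (nat \<times> nat) option \<Rightarrow> nat" where
  "wf k x = (case x of None \<Rightarrow> 4*k+1
     | Some (i,j) \<Rightarrow> if j = 1 then i else if j = 2 then k+i
                     else if j = 3 then 3*k+1-i else 4*k+1-i)"

lemma orient: "is_orientation (windmill_V k) (windmill_E k) (wD k)"
proof -
  have A: "\<forall>(x,y)\<in>wD k. {x,y} \<in> windmill_E k"
    unfolding wD_def windmill_E_def by (auto simp: insert_commute)
  have B: "\<forall>e\<in>windmill_E k. \<exists>x y. e = {x,y} \<and> x \<noteq> y \<and> (((x,y) \<in> wD k) \<noteq> ((y,x) \<in> wD k))"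
  proof
    fix e assume "e \<in> windmill_E k"
    then obtain i where i: "i \<in> {1..k}" and
      "e \<in> {{Some (i,1), Some (i,2)}, {Some (i,1), Some (i,3)},
      {Some (i,3), Some (i,4)}, {Some (i,2), Some (i,4)},
      {None, Some (i,1)}, {None, Some (i,2)}, {None, Some (i,3)}, {None, Some (i,4)}}"
      unfolding windmill_E_def by blast
    then consider "e = {Some (i,2), Some (i,1)}" | "e = {Some (i,3), Some (i,1)}"
      | "e = {Some (i,3), Some (i,4)}" | "e = {Some (i,2), Some (i,4)}"
      | "e = {Some (i,1), None}" | "e = {Some (i,4), None}"
      | "e = {None, Some (i,2)}" | "e = {None, Some (i,3)}"
      by (auto simp: insert_commute)
    then show "\<exists>x y. e = {x,y} \<and> x \<noteq> y \<and> (((x,y) \<in> wD k) \<noteq> ((y,x) \<in> wD k))"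
    proof cases
      case 1 then show ?thesis using i
        by (intro exI[of _ "Some (i,2)"] exI[of _ "Some (i,1)"]) (auto simp: wD_def)
    next
      case 2 then show ?thesis using i
        by (intro exI[of _ "Some (i,3)"] exI[of _ "Some (i,1)"]) (auto simp: wD_def)
    next
      case 3 then show ?thesis using i
        by (intro exI[of _ "Some (i,3)"] exI[of _ "Some (i,4)"]) (auto simp: wD_def)
    next
      case 4 then show ?thesis using i
        by (intro exI[of _ "Some (i,2)"] exI[of _ "Some (i,4)"]) (auto simp: wD_def)
    next
      case 5 then show ?thesis using i
        by (intro exI[of _ "Some (i,1)"] exI[of _ "None"]) (auto simp: wD_def)
    next
      case 6 then show ?thesis using i
        by (intro exI[of _ "Some (i,4)"] exI[of _ "None"]) (auto simp: wD_def)
    next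
      case 7 then show ?thesis using i
        by (intro exI[of _ "None"] exI[of _ "Some (i,2)"]) (auto simp: wD_def)
    next
      case 8 then show ?thesis using i
        by (intro exI[of _ "None"] exI[of _ "Some (i,3)"]) (auto simp: wD_def)
    qed
  qed
  show ?thesis unfolding is_orientation_def using A B by blast
qed

lemma V_eq: "windmill_V k = insert None ((\<lambda>p. Some p) ` ({1..k} \<times> {1..4}))"
  unfolding windmill_V_def by auto

lemma card_V: "card (windmill_V k) = 4*k+1"
proof -
  have "card ((\<lambda>p. Some p) ` ({1..k} \<times> {1..(4::nat)})) = k * 4"
    by (subst card_image) (auto simp: card_cartesian_product)
  then show ?thesis unfolding V_eq by (subst card_insert_disjoint) auto
qed

lemma bij: "bij_betw (wf k) (windmill_V k) {1..4*k+1}"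
proof -
  have j4: "j = 1 \<or> j = 2 \<or> j = 3 \<or> j = 4" if "1 \<le> j" "j \<le> (4::nat)" for j
    using that by auto
  have inj: "inj_on (wf k) (windmill_V k)"
  proof (rule inj_onI)
    fix x y assume x: "x \<in> windmill_V k" and y: "y \<in> windmill_V k" and e: "wf k x = wf k y"
    show "x = y"
    proof (cases x)
      case None
      show ?thesis
      proof (cases y)
        case (Some q)
        then obtain i' j' where yi: "y = Some (i',j')" "1 \<le> i'" "i' \<le> k" "1 \<le> j'" "j' \<le> 4"
          using y by (auto simp: windmill_V_def)
        from j4[OF yi(4,5)] e yi None show ?thesis
          by (elim disjE) (auto simp: wf_def)
      qed (use None in simp)
    next
      case (Some p)
      then obtain i j where xi: "x = Some (i,j)" "1 \<le> i" "i \<le> k" "1 \<le> j" "j \<le> 4"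
        using x by (auto simp: windmill_V_def)
      show ?thesis
      proof (cases y)
        case None
        from j4[OF xi(4,5)] e xi None show ?thesis
          by (elim disjE) (auto simp: wf_def)
      next
        case (Some q)
        then obtain i' j' where yi: "y = Some (i',j')" "1 \<le> i'" "i' \<le> k" "1 \<le> j'" "j' \<le> 4"
          using y by (auto simp: windmill_V_def)
        from j4[OF xi(4,5)] j4[OF yi(4,5)] e xi yi show ?thesis
          by (elim disjE) (auto simp: wf_def)
      qed
    qed
  qed
  have "wf k ` windmill_V k \<subseteq> {1..4*k+1}"
    unfolding windmill_V_def wf_def by auto
  moreover have "{1..4*k+1} \<subseteq> wf k ` windmill_V k"
  proof
    fix n assume n: "n \<in> {1..4*k+1}"
    show "n \<in> wf k ` windmill_V k"
    proof (cases "n = 4*k+1")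
      case True then show ?thesis
        by (intro image_eqI[of _ _ None]) (auto simp: wf_def windmill_V_def)
    next
      case F: False
      show ?thesis
      proof (cases "n \<le> k")
        case True then show ?thesis using n
          by (intro image_eqI[of _ _ "Some (n,1)"]) (auto simp: wf_def windmill_V_def)
      next
        case F2: False
        show ?thesis
        proof (cases "n \<le> 2*k")
          case True then show ?thesis using n F2
            by (intro image_eqI[of _ _ "Some (n-k,2)"]) (auto simp: wf_def windmill_V_def)
        next
          case F3: False
          show ?thesis
          proof (cases "n \<le> 3*k")
            case True then show ?thesis using n F3
              by (intro image_eqI[of _ _ "Some (3*k+1-n,3)"]) (auto simp: wf_def windmill_V_def)
          next
            case False then show ?thesis using n F
              by (intro image_eqI[of _ _ "Some (4*k+1-n,4)"]) (auto simp: wf_def windmill_V_def)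
          qed
        qed
      qed
    qed
  qed
  ultimately show ?thesis using inj unfolding bij_betw_def by blast
qed

lemma wt_center: "wt (wD k) (wf k) None = 0"
proof -
  have I: "in_nbrs (wD k) None = Some ` ({1..k} \<times> {1,4})"
    unfolding in_nbrs_def wD_def by auto
  have O: "out_nbrs (wD k) None = Some ` ({1..k} \<times> {2,3})"
    unfolding out_nbrs_def wD_def by auto
  have s1: "(\<Sum>y\<in>in_nbrs (wD k) None. int (wf k y)) = (\<Sum>i\<in>{1..k}. int (4*k+1))"
  proof -
    have "(\<Sum>y\<in>in_nbrs (wD k) None. int (wf k y)) = (\<Sum>p\<in>{1..k} \<times> {1,4}. int (wf k (Some p)))"
      unfolding I by (subst sum.reindex) auto
    also have "\<dots> = (\<Sum>i\<in>{1..k}. \<Sum>j\<in>{1,4}. int (wf k (Some (i,j))))"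
      by (rule sum.cartesian_product')
    also have "\<dots> = (\<Sum>i\<in>{1..k}. int (4*k+1))"
      by (intro sum.cong) (auto simp: wf_def of_nat_diff)
    finally show ?thesis .
  qed
  have s2: "(\<Sum>y\<in>out_nbrs (wD k) None. int (wf k y)) = (\<Sum>i\<in>{1..k}. int (4*k+1))"
  proof -
    have "(\<Sum>y\<in>out_nbrs (wD k) None. int (wf k y)) = (\<Sum>p\<in>{1..k} \<times> {2,3}. int (wf k (Some p)))"
      unfolding O by (subst sum.reindex) auto
    also have "\<dots> = (\<Sum>i\<in>{1..k}. \<Sum>j\<in>{2,3}. int (wf k (Some (i,j))))"
      by (rule sum.cartesian_product')
    also have "\<dots> = (\<Sum>i\<in>{1..k}. int (4*k+1))"
      by (intro sum.cong) (auto simp: wf_def of_nat_diff)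
    finally show ?thesis .
  qed
  show ?thesis unfolding wt_def s1 s2 by simp
qed


lemma wt_rim:
  assumes "1 \<le> i" "i \<le> k" "j = 1 \<or> j = 2 \<or> j = 3 \<or> j = (4::nat)"
  shows "wt (wD k) (wf k) (Some (i,j)) = 0"
  using assms(3)
proof (elim disjE)
  assume j: "j = 1"
  have "in_nbrs (wD k) (Some (i,j)) = {Some (i,2), Some (i,3)}"
    using assms j unfolding in_nbrs_def wD_def by auto
  moreover have "out_nbrs (wD k) (Some (i,j)) = {None}"
    using assms j unfolding out_nbrs_def wD_def by auto
  ultimately show ?thesis using assms unfolding wt_def by (simp add: wf_def of_nat_diff)
next
  assume j: "j = 4"
  have "in_nbrs (wD k) (Some (i,j)) = {Some (i,2), Some (i,3)}"
    using assms j unfolding in_nbrs_def wD_def by auto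
  moreover have "out_nbrs (wD k) (Some (i,j)) = {None}"
    using assms j unfolding out_nbrs_def wD_def by auto
  ultimately show ?thesis using assms unfolding wt_def by (simp add: wf_def of_nat_diff)
next
  assume j: "j = 2"
  have "in_nbrs (wD k) (Some (i,j)) = {None}"
    using assms j unfolding in_nbrs_def wD_def by auto
  moreover have "out_nbrs (wD k) (Some (i,j)) = {Some (i,1), Some (i,4)}"
    using assms j unfolding out_nbrs_def wD_def by auto
  ultimately show ?thesis using assms unfolding wt_def by (simp add: wf_def of_nat_diff)
next
  assume j: "j = 3"
  have "in_nbrs (wD k) (Some (i,j)) = {None}"
    using assms j unfolding in_nbrs_def wD_def by auto
  moreover have "out_nbrs (wD k) (Some (i,j)) = {Some (i,1), Some (i,4)}"
    using assms j unfolding out_nbrs_def wD_def by auto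
  ultimately show ?thesis using assms unfolding wt_def by (simp add: wf_def of_nat_diff)
qed

theorem theorem4:
  fixes k :: nat
  assumes "k \<ge> 1"
  shows "DDMO (windmill_V k) (windmill_E k)"
proof -
  have "\<forall>x\<in>windmill_V k. wt (wD k) (wf k) x = 0"
  proof
    fix x assume x: "x \<in> windmill_V k"
    show "wt (wD k) (wf k) x = 0"
    proof (cases x)
      case None then show ?thesis using wt_center by simp
    next
      case (Some p)
      then obtain i j where xi: "x = Some (i,j)" "1 \<le> i" "i \<le> k" "1 \<le> j" "j \<le> 4"
        using x by (auto simp: windmill_V_def)
      have "j = 1 \<or> j = 2 \<or> j = 3 \<or> j = 4" using xi by auto
      then show ?thesis using wt_rim xi by blast
    qed
  qed
  then have "is_DDM_labeling (windmill_V k) (wD k) (wf k)"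
    unfolding is_DDM_labeling_def card_V using bij by blast
  then show ?thesis unfolding DDMO_def using orient by blast
qed

end
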